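(* Let $(G,<)$ be an ordered group and let $x,y\in G$ be distinct elements with $1<x$ and $1<y$ such that the submonoid of $G$ generated by $x$ and $y$ is the free monoid on $\{x,y\}$. Let $k$ be a field. Then the $k$-subalgebra of the group algebra $k[G]$ generated by $x+x^{-1}$ and $y+y^{-1}$ is the free $k$-algebra on $\{x+x^{-1},y+y^{-1}\}$.
   Context: An ordered group is a group with a total order $<$ such that $a<b$ implies $ca<cb$ and $ac<bc$ for all $a,b,c$. The free $k$-algebra on a set $X$ is the algebra of noncommutative polynomials in the variables $X$. *)

theory Defs
  imports Main
begin

text \<open>The group G is a type of class group_add (a possibly non-commutative group,
written additively: 0 is the identity, u + v the product, - u the inverse).
Elements of the group algebra k[G] are finitely supported functions G \<Rightarrow> k.\<close>

definition ordered_group :: "'g::{group_add,linorder} itself \<Rightarrow> bool" where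
  "ordered_group _ \<longleftrightarrow>
     (\<forall>a b c :: 'g. a < b \<longrightarrow> c + a < c + b \<and> a + c < b + c)"

definition word_val :: "'g::group_add \<Rightarrow> 'g \<Rightarrow> bool list \<Rightarrow> 'g" where
  "word_val x y w = foldr (\<lambda>c acc. (if c then x else y) + acc) w 0"

definition free_submonoid2 :: "'g::group_add \<Rightarrow> 'g \<Rightarrow> bool" where
  "free_submonoid2 x y \<longleftrightarrow> x \<noteq> y \<and> inj (word_val x y)"

definition supp :: "('a \<Rightarrow> 'k::zero) \<Rightarrow> 'a set" where
  "supp f = {u. f u \<noteq> 0}"

definition gdelta :: "'g \<Rightarrow> 'g \<Rightarrow> 'k::zero_neq_one" where
  "gdelta g = (\<lambda>z. if z = g then 1 else 0)"

definition gadd :: "('g \<Rightarrow> 'k::field) \<Rightarrow> ('g \<Rightarrow> 'k) \<Rightarrow> 'g \<Rightarrow> 'k" where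
  "gadd f h = (\<lambda>z. f z + h z)"

definition gmult :: "('g::group_add \<Rightarrow> 'k::field) \<Rightarrow> ('g \<Rightarrow> 'k) \<Rightarrow> 'g \<Rightarrow> 'k" where
  "gmult f h = (\<lambda>z. \<Sum>u\<in>supp f. f u * h (- u + z))"

definition alg_word :: "('g::group_add \<Rightarrow> 'k::field) \<Rightarrow> ('g \<Rightarrow> 'k) \<Rightarrow> bool list \<Rightarrow> 'g \<Rightarrow> 'k" where
  "alg_word a b w = foldr (\<lambda>c acc. gmult (if c then a else b) acc) w (gdelta 0)"

text \<open>Noncommutative polynomials k<X,Y>: finitely supported coefficient functions on
words. Evaluation homomorphism at (a,b).\<close>
definition alg_eval :: "('g::group_add \<Rightarrow> 'k::field) \<Rightarrow> ('g \<Rightarrow> 'k) \<Rightarrow> (bool list \<Rightarrow> 'k) \<Rightarrow> 'g \<Rightarrow> 'k" where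
  "alg_eval a b p = (\<lambda>z. \<Sum>w\<in>supp p. p w * alg_word a b w z)"

text \<open>The subalgebra generated by a and b is free on {a,b}: the evaluation map from
the free algebra k<X,Y> onto it is injective (it is surjective by construction).\<close>
definition free_subalgebra2 :: "('g::group_add \<Rightarrow> 'k::field) \<Rightarrow> ('g \<Rightarrow> 'k) \<Rightarrow> bool" where
  "free_subalgebra2 a b \<longleftrightarrow>
     (\<forall>p q :: bool list \<Rightarrow> 'k. finite (supp p) \<longrightarrow> finite (supp q) \<longrightarrow>
        alg_eval a b p = alg_eval a b q \<longrightarrow> p = q)"

end

theory Submission
  imports Defs
begin

lemma gm:
  fixes x :: "'g::group_add" and h :: "'g \<Rightarrow> 'k::field"
  assumes "x \<noteq> - x"
  shows "gmult (gadd (gdelta x) (gdelta (- x))) h z = h (- x + z) + h (x + z)"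
proof -
  have s: "supp (gadd (gdelta x) (gdelta (- x)) :: 'g \<Rightarrow> 'k) = {x, - x}"
    using assms by (auto simp: supp_def gadd_def gdelta_def)
  show ?thesis using assms
    unfolding gmult_def s by (simp add: gadd_def gdelta_def add.commute)
qed

lemma og_le:
  fixes a b c :: "'g::{group_add,linorder}"
  assumes "ordered_group TYPE('g)" "a \<le> b"
  shows "c + a \<le> c + b" "a + c \<le> b + c"
  using assms unfolding ordered_group_def
  by (metis less_le order_refl)+

lemma og_lt:
  fixes a b c :: "'g::{group_add,linorder}"
  assumes "ordered_group TYPE('g)" "a < b"
  shows "c + a < c + b" "a + c < b + c"
  using assms unfolding ordered_group_def by auto

lemma key:
  fixes x y :: "'g::{group_add,linorder}"
  assumes og: "ordered_group TYPE('g)" and x0: "0 < x" and y0: "0 < y"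
  defines "A \<equiv> alg_word (gadd (gdelta x) (gdelta (- x)) :: 'g \<Rightarrow> 'k::field)
                 (gadd (gdelta y) (gdelta (- y)))"
  shows "A w (word_val x y w) = 1 \<and> (\<forall>z. A w z \<noteq> 0 \<longrightarrow> z \<le> word_val x y w)"
proof (induction w)
  case Nil
  then show ?case by (simp add: A_def alg_word_def word_val_def gdelta_def)
next
  case (Cons c w)
  define g where "g = (if c then x else y)"
  define v where "v = word_val x y w"
  have g0: "0 < g" using x0 y0 by (simp add: g_def)
  have ng: "- g < 0" using og_lt(2)[OF og g0, of "-g"] by simp
  have gng: "g \<noteq> - g" using ng g0 by auto
  have wv: "word_val x y (c # w) = g + v"
    by (simp add: word_val_def g_def v_def)
  have Ac: "A (c # w) z = A w (- g + z) + A w (g + z)" for z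
  proof -
    have "A (c # w) = gmult (if c then gadd (gdelta x) (gdelta (- x)) else gadd (gdelta y) (gdelta (- y))) (A w)"
      by (simp add: A_def alg_word_def)
    also have "\<dots> = gmult (gadd (gdelta g) (gdelta (- g))) (A w)" by (simp add: g_def)
    finally show ?thesis using gm[OF gng] by simp
  qed
  have IH1: "A w v = 1" and IH2: "\<And>z. A w z \<noteq> 0 \<Longrightarrow> z \<le> v"
    using Cons.IH by (auto simp: v_def)
  have "g + v > v" using og_lt(2)[OF og g0, of v] by simp
  hence "g + v < g + (g + v)" using og_lt(1)[OF og, of v "g+v" g] by simp
  hence "g + (g + v) > v" using \<open>g + v > v\<close> by (rule less_trans[rotated])
  hence z1: "A w (g + (g + v)) = 0" using IH2 by (meson leD)
  have p1: "A (c # w) (g + v) = 1"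
    using Ac[of "g+v"] IH1 z1 by (simp add: add.assoc[symmetric])
  have p2: "z \<le> g + v" if "A (c # w) z \<noteq> 0" for z
  proof -
    have "A w (- g + z) \<noteq> 0 \<or> A w (g + z) \<noteq> 0" using that Ac by auto
    then show ?thesis
    proof
      assume "A w (- g + z) \<noteq> 0"
      hence "- g + z \<le> v" by (rule IH2)
      from og_le(1)[OF og this, of g] show ?thesis by (simp add: add.assoc[symmetric])
    next
      assume "A w (g + z) \<noteq> 0"
      hence "g + z \<le> v" by (rule IH2)
      from og_le(1)[OF og this, of "-g"] have "z \<le> - g + v" by (simp add: add.assoc[symmetric])
      also have "- g + v \<le> g + v" using og_le(2)[OF og, of "-g" g v] ng g0 by simp
      finally show ?thesis .
    qed
  qed
  show ?case using p1 p2 wv by auto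
qed

theorem mainTheorem4:
  fixes x y :: "'g::{group_add,linorder}"
  assumes "ordered_group TYPE('g)"
    and "x \<noteq> y" and "0 < x" and "0 < y"
    and "free_submonoid2 x y"
  shows "free_subalgebra2
           (gadd (gdelta x) (gdelta (- x)) :: 'g \<Rightarrow> 'k::field)
           (gadd (gdelta y) (gdelta (- y)))"
  unfolding free_subalgebra2_def
proof (intro allI impI)
  fix p q :: "bool list \<Rightarrow> 'k"
  define a where "a = (gadd (gdelta x) (gdelta (- x)) :: 'g \<Rightarrow> 'k)"
  define b where "b = (gadd (gdelta y) (gdelta (- y)) :: 'g \<Rightarrow> 'k)"
  define A where "A = alg_word a b"
  have K: "A w (word_val x y w) = 1 \<and> (\<forall>z. A w z \<noteq> 0 \<longrightarrow> z \<le> word_val x y w)" for w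
    using key[OF assms(1,3,4)] unfolding A_def a_def b_def by blast
  have inj: "inj (word_val x y)" using assms(5) by (simp add: free_submonoid2_def)
  assume fp: "finite (supp p)" and fq: "finite (supp q)"
    and eq: "alg_eval a b p = alg_eval a b q"
  show "p = q"
  proof (rule ccontr)
    assume ne: "p \<noteq> q"
    define S where "S = supp p \<union> supp q"
    define D where "D = {w. p w \<noteq> q w}"
    have fS: "finite S" using fp fq by (simp add: S_def)
    have DS: "D \<subseteq> S" by (auto simp: D_def S_def supp_def)
    have fD: "finite D" using DS fS finite_subset by blast
    have Dne: "D \<noteq> {}" using ne by (auto simp: D_def)
    define z0 where "z0 = Max (word_val x y ` D)"
    have "z0 \<in> word_val x y ` D" unfolding z0_def using fD Dne by simp
    then obtain w0 where w0: "w0 \<in> D" "word_val x y w0 = z0" by auto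
    have zmax: "w \<in> D \<Longrightarrow> word_val x y w \<le> z0" for w
      unfolding z0_def using fD by simp
    have ep: "alg_eval a b p z0 = (\<Sum>w\<in>S. p w * A w z0)"
      unfolding alg_eval_def A_def
      by (rule sum.mono_neutral_left) (use fp fq in \<open>auto simp: S_def supp_def\<close>)
    have eqq: "alg_eval a b q z0 = (\<Sum>w\<in>S. q w * A w z0)"
      unfolding alg_eval_def A_def
      by (rule sum.mono_neutral_left) (use fp fq in \<open>auto simp: S_def supp_def\<close>)
    have "0 = (\<Sum>w\<in>S. p w * A w z0) - (\<Sum>w\<in>S. q w * A w z0)"
      using ep eqq eq by simp
    also have "\<dots> = (\<Sum>w\<in>S. (p w - q w) * A w z0)"
      by (simp add: sum_subtractf left_diff_distrib)
    also have "\<dots> = (p w0 - q w0) * A w0 z0"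
    proof -
      have w0S: "w0 \<in> S" using w0 DS by auto
      have "(\<Sum>w\<in>S. (p w - q w) * A w z0) = (\<Sum>w\<in>{w0}. (p w - q w) * A w z0)"
      proof (rule sum.mono_neutral_right[OF fS])
        show "{w0} \<subseteq> S" using w0S by simp
        show "\<forall>w\<in>S - {w0}. (p w - q w) * A w z0 = 0"
        proof
          fix w assume wS: "w \<in> S - {w0}"
          show "(p w - q w) * A w z0 = 0"
          proof (cases "w \<in> D")
            case True
            hence le: "word_val x y w \<le> z0" by (rule zmax)
            have "word_val x y w \<noteq> z0" using w0(2) wS inj by (metis DiffE injD singletonI)
            hence "word_val x y w < z0" using le by simp
            hence "A w z0 = 0" using K[of w] by (meson leD)
            then show ?thesis by simp
          qed (simp add: D_def)
        qed
      qed
      then show ?thesis by simp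
    qed
    also have "\<dots> = p w0 - q w0" using K[of w0] w0 by simp
    finally show False using w0 by (simp add: D_def)
  qed
qed

end
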